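(* If $G$ is a $4$-regular graph on $7$ vertices, then $\mu(G)\le 3$.
   Context: All graphs are finite and simple. For a graph $G=(V,E)$ on $n$ vertices, a fractional vertex cover is a function $f:V\to[0,\infty)$ with $f(u)+f(v)\ge 1$ for every edge $uv\in E$; $\tau^*(G)$ denotes the minimum of $\sum_{v\in V}f(v)$ over all fractional vertex covers. For $E'\subseteq E$ let $G-E'=(V,E\setminus E')$. Define $\mu(G)=\min\{|E'| : E'\subseteq E,\ \tau^*(G-E')<n/2\}$. *)

theory Defs
  imports Complex_Main
begin

definition simple_graph :: "'a set \<Rightarrow> 'a set set \<Rightarrow> bool" where
  "simple_graph V E \<longleftrightarrow> finite V \<and> (\<forall>e\<in>E. e \<subseteq> V \<and> card e = 2)"

definition degree :: "'a set set \<Rightarrow> 'a \<Rightarrow> nat" where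
  "degree E v = card {e \<in> E. v \<in> e}"

definition regular :: "nat \<Rightarrow> 'a set \<Rightarrow> 'a set set \<Rightarrow> bool" where
  "regular k V E \<longleftrightarrow> (\<forall>v\<in>V. degree E v = k)"

definition frac_vertex_cover :: "'a set \<Rightarrow> 'a set set \<Rightarrow> ('a \<Rightarrow> real) \<Rightarrow> bool" where
  "frac_vertex_cover V E f \<longleftrightarrow>
     (\<forall>v\<in>V. f v \<ge> 0) \<and> (\<forall>u v. {u, v} \<in> E \<longrightarrow> f u + f v \<ge> 1)"

text \<open>tau* = minimum (infimum; the LP minimum is attained) of total weight.\<close>
definition tau_star :: "'a set \<Rightarrow> 'a set set \<Rightarrow> real" where
  "tau_star V E = Inf {(\<Sum>v\<in>V. f v) | f. frac_vertex_cover V E f}"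

definition mu :: "'a set \<Rightarrow> 'a set set \<Rightarrow> nat" where
  "mu V E = (LEAST k. \<exists>E'. E' \<subseteq> E \<and> card E' = k \<and> tau_star V (E - E') < real (card V) / 2)"

end

theory Submission
  imports Defs
begin

definition Hn :: "'a set \<Rightarrow> 'a set set \<Rightarrow> 'a \<Rightarrow> 'a set" where
  "Hn V E v = {u\<in>V. u \<noteq> v \<and> {u,v} \<notin> E}"

lemma card_Hn:
  assumes sg: "simple_graph V E" and reg: "regular 4 V E" and cV: "card V = 7" and v: "v \<in> V"
  shows "card (Hn V E v) = 2"
proof -
  have fin: "finite V" using sg by (simp add: simple_graph_def)
  define Nb where "Nb = {u\<in>V. {u,v} \<in> E}"
  have "bij_betw (\<lambda>u. {u,v}) Nb {e\<in>E. v\<in>e}"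
  proof (rule bij_betwI')
    fix x y assume "x \<in> Nb" "y \<in> Nb"
    then have "x \<noteq> v" "y \<noteq> v" using sg unfolding Nb_def simple_graph_def by fastforce+
    then show "({x, v} = {y, v}) = (x = y)" by (metis doubleton_eq_iff)
  next
    fix x assume "x \<in> Nb" then show "{x, v} \<in> {e \<in> E. v \<in> e}" unfolding Nb_def by auto
  next
    fix e assume e: "e \<in> {e \<in> E. v \<in> e}"
    then have "card e = 2" "e \<subseteq> V" using sg unfolding simple_graph_def by auto
    then obtain x y where xy: "e = {x,y}" "x \<noteq> y" by (meson card_2_iff)
    then have "e = {x,v} \<or> e = {y,v}" using e by auto
    then show "\<exists>x\<in>Nb. e = {x, v}" using e \<open>e \<subseteq> V\<close> xy unfolding Nb_def by auto
  qed
  then have "card Nb = 4" using reg v by (simp add: bij_betw_same_card regular_def degree_def)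
  have sub: "Nb \<subseteq> V - {v}" using sg unfolding Nb_def simple_graph_def by fastforce
  have "Hn V E v = (V - {v}) - Nb" unfolding Hn_def Nb_def by auto
  then have "card (Hn V E v) = card (V - {v}) - card Nb"
    using sub fin by (simp add: card_Diff_subset finite_subset)
  also have "card (V - {v}) = 6" using cV v fin by simp
  finally show ?thesis using \<open>card Nb = 4\<close> by simp
qed

lemma Hn_sym: "u \<in> Hn V E v \<Longrightarrow> v \<in> V \<Longrightarrow> v \<in> Hn V E u"
  unfolding Hn_def by (auto simp: insert_commute)

definition good :: "'a set \<Rightarrow> 'a set set \<Rightarrow> bool" where
  "good V E \<longleftrightarrow> (\<exists>a b c d. a \<in> V \<and> b \<in> V \<and> c \<in> V \<and> d \<in> V \<and> distinct [a,b,c,d] \<and>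
     {a,b} \<notin> E \<and> {a,c} \<notin> E \<and> {b,d} \<notin> E)"

lemma card2_obtain:
  assumes "card A = 2" "a \<in> A"
  obtains b where "A = {a,b}" "a \<noteq> b"
  using assms by (metis card_2_iff doubleton_eq_iff insertE singletonD)

lemma Hn_mem: "u \<in> Hn V E v \<Longrightarrow> u \<in> V \<and> u \<noteq> v \<and> {v,u} \<notin> E"
  unfolding Hn_def by (auto simp: insert_commute)

lemma triangle:
  assumes sg: "simple_graph V E" and reg: "regular 4 V E" and cV: "card V = 7" and a: "a \<in> V"
    and ng: "\<not> good V E"
  shows "\<exists>b c. a \<noteq> b \<and> a \<noteq> c \<and> b \<noteq> c \<and> Hn V E a = {b,c} \<and> Hn V E b = {a,c} \<and> Hn V E c = {a,b}"
proof -
  have c2: "\<And>v. v \<in> V \<Longrightarrow> card (Hn V E v) = 2" using card_Hn[OF sg reg cV] by blast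
  from c2[OF a] obtain b c where bc: "Hn V E a = {b,c}" "b \<noteq> c"
    unfolding card_2_iff by blast
  have hb: "b \<in> Hn V E a" and hc: "c \<in> Hn V E a" using bc(1) by auto
  note mb = Hn_mem[OF hb] and mc = Hn_mem[OF hc]
  have ab: "a \<in> Hn V E b" using Hn_sym[OF hb a] .
  obtain d where d: "Hn V E b = {a,d}" "a \<noteq> d" using card2_obtain[OF c2[of b] ab] mb by blast
  have dc: "d = c"
  proof (rule ccontr)
    assume ndc: "d \<noteq> c"
    have "d \<in> Hn V E b" using d(1) by auto
    note md = Hn_mem[OF this]
    have "good V E" unfolding good_def
      apply (rule exI[of _ a], rule exI[of _ b], rule exI[of _ c], rule exI[of _ d])
      using a mb mc md ndc d(2) bc(2) by auto
    then show False using ng by simp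
  qed
  have ac: "a \<in> Hn V E c" using Hn_sym[OF hc a] .
  obtain d' where d2: "Hn V E c = {a,d'}" "a \<noteq> d'" using card2_obtain[OF c2[of c] ac] mc by blast
  have db: "d' = b"
  proof (rule ccontr)
    assume ndb: "d' \<noteq> b"
    have "d' \<in> Hn V E c" using d2(1) by auto
    note md = Hn_mem[OF this]
    have "good V E" unfolding good_def
      apply (rule exI[of _ a], rule exI[of _ c], rule exI[of _ b], rule exI[of _ d'])
      using a mb mc md ndb d2(2) bc(2) by auto
    then show False using ng by simp
  qed
  have "a \<noteq> b \<and> a \<noteq> c \<and> b \<noteq> c \<and> Hn V E a = {b,c} \<and> Hn V E b = {a,c} \<and> Hn V E c = {a,b}"
    using bc mb mc d dc d2 db by simp
  then show ?thesis by blast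
qed

lemma good_exists:
  assumes sg: "simple_graph V E" and reg: "regular 4 V E" and cV: "card V = 7"
  shows "good V E"
proof (rule ccontr)
  assume ng: "\<not> good V E"
  have fin: "finite V" using sg by (simp add: simple_graph_def)
  have HV: "\<And>v. Hn V E v \<subseteq> V" unfolding Hn_def by auto
  have "V \<noteq> {}" using cV by auto
  then obtain a where a: "a \<in> V" by auto
  obtain b c where T1: "a \<noteq> b" "a \<noteq> c" "b \<noteq> c" "Hn V E a = {b,c}" "Hn V E b = {a,c}" "Hn V E c = {a,b}"
    using triangle[OF sg reg cV a ng] by blast
  have T1V: "{a,b,c} \<subseteq> V" using a T1 HV by blast
  have "card {a,b,c} = 3" using T1 by simp
  then have "card (V - {a,b,c}) = 4" using T1V fin cV by (simp add: card_Diff_subset)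
  then have "V - {a,b,c} \<noteq> {}" by force
  then obtain x where x: "x \<in> V" "x \<notin> {a,b,c}" by auto
  obtain y z where T2: "x \<noteq> y" "x \<noteq> z" "y \<noteq> z" "Hn V E x = {y,z}" "Hn V E y = {x,z}" "Hn V E z = {x,y}"
    using triangle[OF sg reg cV x(1) ng] by blast
  have T2V: "{x,y,z} \<subseteq> V" using x T2 HV by blast
  have yz: "y \<notin> {a,b,c}" "z \<notin> {a,b,c}"
    using T1 T2 x by auto
  have "card ({a,b,c} \<union> {x,y,z}) = 6" using T1 T2 x yz by simp
  moreover have "{a,b,c} \<union> {x,y,z} \<subseteq> V" using T1V T2V by simp
  ultimately have "card (V - ({a,b,c} \<union> {x,y,z})) = 1" using fin cV by (simp add: card_Diff_subset)
  then obtain t where t: "V - ({a,b,c} \<union> {x,y,z}) = {t}" by (meson card_1_singletonE)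
  then have tV: "t \<in> V" by auto
  obtain p q where T3: "t \<noteq> p" "t \<noteq> q" "p \<noteq> q" "Hn V E t = {p,q}" "Hn V E p = {t,q}" "Hn V E q = {t,p}"
    using triangle[OF sg reg cV tV ng] by blast
  have "p \<in> V" using T3 HV by blast
  have tn: "t \<notin> {a,b,c} \<union> {x,y,z}" using t by blast
  have tHp: "t \<in> Hn V E p" using Hn_sym[of p V E t] T3 tV by simp
  have "p \<notin> {a,b,c}"
  proof
    assume "p \<in> {a,b,c}"
    then have "Hn V E p \<subseteq> {a,b,c}" using T1 by auto
    then show False using tHp tn by blast
  qed
  moreover have "p \<notin> {x,y,z}"
  proof
    assume "p \<in> {x,y,z}"
    then have "Hn V E p \<subseteq> {x,y,z}" using T2 by auto
    then show False using tHp tn by blast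
  qed
  ultimately have "p \<notin> {a,b,c} \<union> {x,y,z}" by blast
  then have "p \<in> {t}" using t \<open>p \<in> V\<close> by blast
  then show False using T3 by simp
qed

theorem lemma32:
  fixes V :: "'a set" and E :: "'a set set"
  assumes "simple_graph V E" and "card V = 7" and "regular 4 V E"
  shows "mu V E \<le> 3"
proof -
  have fin: "finite V" using assms(1) by (simp add: simple_graph_def)
  obtain a b c d where abcd: "a \<in> V" "b \<in> V" "c \<in> V" "d \<in> V" "distinct [a,b,c,d]"
     "{a,b} \<notin> E" "{a,c} \<notin> E" "{b,d} \<notin> E"
    using good_exists[OF assms(1) assms(3) assms(2)] unfolding good_def by blast
  define I where "I = {a,b,c,d}"
  define E' where "E' = {e\<in>E. e \<subseteq> I}"
  have E'sub: "E' \<subseteq> {e. e \<subseteq> I \<and> card e = 2} - {{a,b},{a,c},{b,d}}"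
    unfolding E'_def using assms(1) abcd unfolding simple_graph_def by auto
  moreover have fS: "finite {e. e \<subseteq> I \<and> card e = 2}"
    unfolding I_def by (rule finite_subset[of _ "Pow {a,b,c,d}"]) auto
  moreover have c3: "card ({e. e \<subseteq> I \<and> card e = 2} - {{a,b},{a,c},{b,d}}) = 3"
  proof -
    have cI: "card I = 4" using abcd unfolding I_def by simp
    have c6: "card {e. e \<subseteq> I \<and> card e = 2} = 6"
      using n_subsets[of I 2] cI unfolding I_def by (simp add: numeral_eq_Suc)
    have sub: "{{a,b},{a,c},{b,d}} \<subseteq> {e. e \<subseteq> I \<and> card e = 2}"
      using abcd unfolding I_def by auto
    have c3: "card {{a,b},{a,c},{b,d}} = 3"
      using abcd by (auto simp: doubleton_eq_iff)
    show ?thesis using card_Diff_subset[OF _ sub] c6 c3 by simp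
  qed
  ultimately have cE': "card E' \<le> 3"
    using card_mono[OF finite_Diff[OF fS] E'sub] by simp
  have "mu V E \<le> card E'"
    unfolding mu_def
  proof (rule Least_le, intro exI conjI)
    show "E' \<subseteq> E" unfolding E'_def by auto
    show "card E' = card E'" by simp
    define f :: "'a \<Rightarrow> real" where "f = (\<lambda>x. if x \<in> I then 0 else 1)"
    have fvc: "frac_vertex_cover V (E - E') f"
      unfolding frac_vertex_cover_def
    proof (intro conjI allI impI ballI)
      fix v assume "v \<in> V" show "0 \<le> f v" unfolding f_def by simp
    next
      fix u v assume "{u,v} \<in> E - E'"
      then have "\<not> {u,v} \<subseteq> I" unfolding E'_def by auto
      then have "u \<notin> I \<or> v \<notin> I" by auto
      then show "1 \<le> f u + f v" unfolding f_def by auto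
    qed
    have IV: "I \<subseteq> V" using abcd unfolding I_def by auto
    have cI: "card I = 4" using abcd unfolding I_def by simp
    have "(\<Sum>v\<in>V. f v) = (\<Sum>v\<in>V - I. 1)"
      unfolding f_def using fin IV by (simp add: sum.If_cases Diff_eq Int_commute)
    also have "\<dots> = 3" using card_Diff_subset[OF finite_subset[OF IV fin] IV] cI assms(2) by simp
    finally have sum3: "(\<Sum>v\<in>V. f v) = 3" .
    have bdd: "bdd_below {(\<Sum>v\<in>V. f v) | f. frac_vertex_cover V (E - E') f}"
      unfolding bdd_below_def
      by (rule exI[of _ 0]) (auto simp: frac_vertex_cover_def intro: sum_nonneg)
    have "tau_star V (E - E') \<le> 3"
      unfolding tau_star_def using sum3 fvc
      by (intro cInf_lower[OF _ bdd]) (metis (mono_tags, lifting) mem_Collect_eq)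
    then show "tau_star V (E - E') < real (card V) / 2" using assms(2) by simp
  qed
  then show ?thesis using cE' by simp
qed

end
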